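(* Let $\mu_1,\mu_2\in\mathbb{R}$, $\sigma_1,\sigma_2>0$ and $k>0$. Consider two stocks with positive prices $p_{it}$, $i=1,2$, at discrete times $t=0,1,2,\dots$, with deterministic equal initial log-prices $\log p_{10}=\log p_{20}$ and $$\log(p_{i,t+1})=\log(p_{it})+\mu_i+\delta_{i,t+1},$$ where all the $\delta_{it}$ ($i=1,2$, $t\ge1$) are independent and $\delta_{it}\sim N(0,\sigma_i^2)$. Define the spread $\epsilon_t=\log(p_{2t})-\log(p_{1t})-(\mu_2-\mu_1)t$ (so $\epsilon_t\sim N(0,s_t^2)$ with $s_t^2=t(\sigma_1^2+\sigma_2^2)$), the signal $S_t=\mathbb{1}\{\epsilon_t\le -ks_t\}-\mathbb{1}\{\epsilon_t\ge ks_t\}$, stock returns $r_{i,t+1}=p_{i,t+1}/p_{it}-1$, and pair return $r_{t+1}=S_t(r_{2,t+1}-r_{1,t+1})$. Let $Z$ be a standard normal random variable. Then for every $t\ge1$, $$\mathbf{E}[r_{t+1}]=0,\qquad \operatorname{Var}(r_{t+1})=2\,\mathbf{P}(Z\ge k)\Big(e^{2\mu_1+2\sigma_1^2}+e^{2\mu_2+2\sigma_2^2}-2e^{\mu_1+\mu_2+\sigma_1^2/2+\sigma_2^2/2}\Big).$$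
   Context: This models a non-cointegrated pair: both log-prices follow independent Gaussian random walks with drift. *)

theory Defs
  imports "HOL-Probability.Probability"
begin

primrec logp :: "real \<Rightarrow> (nat \<Rightarrow> real) \<Rightarrow> (nat \<Rightarrow> nat \<Rightarrow> 'a \<Rightarrow> real) \<Rightarrow> nat \<Rightarrow> nat \<Rightarrow> 'a \<Rightarrow> real" where
  "logp l0 mu delta i 0 \<omega> = l0"
| "logp l0 mu delta i (Suc t) \<omega> = logp l0 mu delta i t \<omega> + mu i + delta i (Suc t) \<omega>"

definition price :: "real \<Rightarrow> (nat \<Rightarrow> real) \<Rightarrow> (nat \<Rightarrow> nat \<Rightarrow> 'a \<Rightarrow> real) \<Rightarrow> nat \<Rightarrow> nat \<Rightarrow> 'a \<Rightarrow> real" where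
  "price l0 mu delta i t \<omega> = exp (logp l0 mu delta i t \<omega>)"

definition spread :: "real \<Rightarrow> (nat \<Rightarrow> real) \<Rightarrow> (nat \<Rightarrow> nat \<Rightarrow> 'a \<Rightarrow> real) \<Rightarrow> nat \<Rightarrow> 'a \<Rightarrow> real" where
  "spread l0 mu delta t \<omega> =
     ln (price l0 mu delta 2 t \<omega>) - ln (price l0 mu delta 1 t \<omega>) - (mu 2 - mu 1) * real t"

definition spread_sd :: "(nat \<Rightarrow> real) \<Rightarrow> nat \<Rightarrow> real" where
  "spread_sd sd t = sqrt (real t * ((sd 1)\<^sup>2 + (sd 2)\<^sup>2))"

definition signal :: "real \<Rightarrow> (nat \<Rightarrow> real) \<Rightarrow> (nat \<Rightarrow> real) \<Rightarrow> real \<Rightarrow> (nat \<Rightarrow> nat \<Rightarrow> 'a \<Rightarrow> real) \<Rightarrow> nat \<Rightarrow> 'a \<Rightarrow> real" where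
  "signal l0 mu sd k delta t \<omega> =
     (if spread l0 mu delta t \<omega> \<le> - k * spread_sd sd t then 1 else 0)
   - (if spread l0 mu delta t \<omega> \<ge> k * spread_sd sd t then 1 else 0)"

definition stock_return :: "real \<Rightarrow> (nat \<Rightarrow> real) \<Rightarrow> (nat \<Rightarrow> nat \<Rightarrow> 'a \<Rightarrow> real) \<Rightarrow> nat \<Rightarrow> nat \<Rightarrow> 'a \<Rightarrow> real" where
  "stock_return l0 mu delta i t \<omega> = price l0 mu delta i (Suc t) \<omega> / price l0 mu delta i t \<omega> - 1"

definition pair_return :: "real \<Rightarrow> (nat \<Rightarrow> real) \<Rightarrow> (nat \<Rightarrow> real) \<Rightarrow> real \<Rightarrow> (nat \<Rightarrow> nat \<Rightarrow> 'a \<Rightarrow> real) \<Rightarrow> nat \<Rightarrow> 'a \<Rightarrow> real" where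
  "pair_return l0 mu sd k delta t \<omega> =
     signal l0 mu sd k delta t \<omega> *
       (stock_return l0 mu delta 2 t \<omega> - stock_return l0 mu delta 1 t \<omega>)"

end

theory Submission
  imports Defs
begin

lemma logp_formula:
  "logp l0 mu delta i t \<omega> = l0 + mu i * real t + (\<Sum>s\<in>{1..t}. delta i s \<omega>)"
  by (induction t) (simp_all add: algebra_simps)

lemma stock_return_formula:
  "stock_return l0 mu delta i t \<omega> = exp (mu i + delta i (Suc t) \<omega>) - 1"
  by (simp add: stock_return_def price_def exp_add)

definition sg :: "nat \<Rightarrow> real" where "sg i = (if i = 2 then 1 else -1)"

lemma spread_formula:
  "spread l0 mu delta t \<omega> = (\<Sum>p\<in>{1::nat,2}\<times>{1..t}. sg (fst p) * delta (fst p) (snd p) \<omega>)"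
proof -
  have "(\<Sum>p\<in>{1::nat,2}\<times>{1..t}. sg (fst p) * delta (fst p) (snd p) \<omega>)
      = (\<Sum>i\<in>{1::nat,2}. \<Sum>s\<in>{1..t}. sg i * delta i s \<omega>)"
    by (simp add: sum.cartesian_product split_beta)
  also have "\<dots> = (\<Sum>s\<in>{1..t}. delta 2 s \<omega>) - (\<Sum>s\<in>{1..t}. delta 1 s \<omega>)"
    by (simp add: sg_def sum_negf)
  finally show ?thesis
    by (simp add: spread_def price_def logp_formula algebra_simps)
qed

lemma sum_prod_split: "(\<Sum>p\<in>A\<times>B. f p) = (\<Sum>i\<in>A. \<Sum>s\<in>B. f (i,s))"
  by (simp add: sum.cartesian_product)

lemma sd_sum:
  "(\<Sum>p\<in>{1::nat,2}\<times>{1..t}. (sd (fst p))\<^sup>2) = real t * ((sd 1)\<^sup>2 + (sd 2)\<^sup>2)"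
proof -
  have "(\<Sum>p\<in>{1::nat,2}\<times>{1..t}. (sd (fst p))\<^sup>2) = (\<Sum>i\<in>{1::nat,2}. \<Sum>s\<in>{1..t}. (sd i)\<^sup>2)"
    by (simp only: sum_prod_split fst_conv)
  then show ?thesis by (simp add: algebra_simps)
qed

lemma normal_exp_moment:
  fixes \<sigma> a b :: real assumes "\<sigma> > 0"
  shows "has_bochner_integral lborel (\<lambda>x. normal_density 0 \<sigma> x * exp (a * x + b))
           (exp (b + a\<^sup>2 * \<sigma>\<^sup>2 / 2))"
proof -
  have eq: "normal_density 0 \<sigma> x * exp (a * x + b) =
      exp (b + a\<^sup>2 * \<sigma>\<^sup>2 / 2) * normal_density (a * \<sigma>\<^sup>2) \<sigma> x" for x
  proof -
    have "- (x - 0)\<^sup>2 / (2 * \<sigma>\<^sup>2) + (a * x + b) = b + a\<^sup>2 * \<sigma>\<^sup>2 / 2 + - (x - a * \<sigma>\<^sup>2)\<^sup>2 / (2 * \<sigma>\<^sup>2)"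
      using assms by (simp add: field_simps power2_eq_square)
    then have "exp (- (x - 0)\<^sup>2 / (2 * \<sigma>\<^sup>2)) * exp (a * x + b) = exp (b + a\<^sup>2 * \<sigma>\<^sup>2 / 2) * exp (- (x - a * \<sigma>\<^sup>2)\<^sup>2 / (2 * \<sigma>\<^sup>2))"
      by (metis exp_add)
    then show ?thesis unfolding normal_density_def by (simp add: field_simps)
  qed
  have "has_bochner_integral lborel (normal_density (a * \<sigma>\<^sup>2) \<sigma>) 1"
    using assms by (simp add: has_bochner_integral_iff)
  from has_bochner_integral_mult_right[OF this, of "exp (b + a\<^sup>2 * \<sigma>\<^sup>2 / 2)"]
  show ?thesis by (simp add: eq)
qed

lemma (in prob_space) normal_exp_expectation:
  fixes \<sigma> a b :: real assumes "\<sigma> > 0" and D: "distributed M lborel X (normal_density 0 \<sigma>)"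
  shows "integrable M (\<lambda>\<omega>. exp (a * X \<omega> + b))"
    and "expectation (\<lambda>\<omega>. exp (a * X \<omega> + b)) = exp (b + a\<^sup>2 * \<sigma>\<^sup>2 / 2)"
proof -
  have h: "has_bochner_integral lborel (\<lambda>x. normal_density 0 \<sigma> x * exp (a * x + b))
           (exp (b + a\<^sup>2 * \<sigma>\<^sup>2 / 2))" by (rule normal_exp_moment[OF assms(1)])
  show "integrable M (\<lambda>\<omega>. exp (a * X \<omega> + b))"
    using distributed_integrable[OF D, of "\<lambda>x. exp (a * x + b)"] h
    by (auto simp: has_bochner_integral_iff)
  show "expectation (\<lambda>\<omega>. exp (a * X \<omega> + b)) = exp (b + a\<^sup>2 * \<sigma>\<^sup>2 / 2)"
    using distributed_integral[OF D, of "\<lambda>x. exp (a * x + b)"] h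
    by (auto simp: has_bochner_integral_iff)
qed

lemma (in prob_space) normal_tail:
  fixes s c :: real assumes "s > 0" and D: "distributed M lborel Y (normal_density 0 s)"
  shows "prob {\<omega>\<in>space M. c \<le> Y \<omega>} = measure (density lborel std_normal_density) {c/s..}"
proof -
  have Z: "distributed M lborel (\<lambda>x. (Y x - 0) / s) std_normal_density"
    using normal_standard_normal_convert[OF assms(1)] D by blast
  have Zm: "(\<lambda>x. (Y x - 0) / s) \<in> measurable M lborel" using distributed_measurable[OF Z] .
  have "{\<omega>\<in>space M. c \<le> Y \<omega>} = (\<lambda>x. (Y x - 0) / s) -` {c/s..} \<inter> space M"
    using assms(1) by (auto simp: divide_le_cancel)
  also have "prob \<dots> = measure (distr M lborel (\<lambda>x. (Y x - 0) / s)) {c/s..}"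
    by (rule measure_distr[symmetric, OF Zm]) simp
  also have "distr M lborel (\<lambda>x. (Y x - 0) / s) = density lborel std_normal_density"
    using distributed_distr_eq_density[OF Z] .
  finally show ?thesis .
qed

lemma (in prob_space) expectation_ind:
  assumes "{\<omega>\<in>space M. P \<omega>} \<in> events"
  shows "expectation (\<lambda>\<omega>. if P \<omega> then 1 else 0 :: real) = prob {\<omega>\<in>space M. P \<omega>}"
proof -
  have "expectation (\<lambda>\<omega>. if P \<omega> then 1 else 0 :: real) = expectation (indicator {\<omega>\<in>space M. P \<omega>})"
    by (rule Bochner_Integration.integral_cong) (auto simp: indicator_def)
  then show ?thesis by (simp add: Int_absorb2)
qed


lemma exp_sq: "(exp (a::real))\<^sup>2 = exp (2 * a)"
  by (simp add: power2_eq_square exp_add[symmetric])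

lemma (in prob_space) integrable_ind:
  assumes "{\<omega>\<in>space M. P \<omega>} \<in> events"
  shows "integrable M (\<lambda>\<omega>. if P \<omega> then 1 else 0 :: real)"
proof -
  have "integrable M (indicator {\<omega>\<in>space M. P \<omega>} :: 'a \<Rightarrow> real)"
    using assms by (intro integrable_real_indicator) (auto simp: emeasure_eq_measure)
  then show ?thesis
    by (rule Bochner_Integration.integrable_cong[THEN iffD1, rotated -1]) (auto simp: indicator_def)
qed

theorem theorem3:
  fixes M :: "'a measure" and mu sd :: "nat \<Rightarrow> real" and k l0 :: real
    and delta :: "nat \<Rightarrow> nat \<Rightarrow> 'a \<Rightarrow> real" and t :: nat
  assumes "prob_space M"
    and "sd 1 > 0" and "sd 2 > 0" and "k > 0"
    and "prob_space.indep_vars M (\<lambda>_. borel) (\<lambda>(i, s). delta i s) ({1, 2} \<times> {1..})"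
    and "\<And>i s. i \<in> {1, 2} \<Longrightarrow> s \<ge> 1 \<Longrightarrow>
           distributed M lborel (delta i s) (normal_density 0 (sd i))"
    and "t \<ge> 1"
  shows "prob_space.expectation M (pair_return l0 mu sd k delta t) = 0
    \<and> prob_space.variance M (pair_return l0 mu sd k delta t) =
        2 * measure (density lborel std_normal_density) {k..} *
        (exp (2 * mu 1 + 2 * (sd 1)\<^sup>2) + exp (2 * mu 2 + 2 * (sd 2)\<^sup>2)
         - 2 * exp (mu 1 + mu 2 + (sd 1)\<^sup>2 / 2 + (sd 2)\<^sup>2 / 2))"
proof -
  interpret prob_space M by fact
  note ind = assms(5)
  have sdpos: "\<And>i. i \<in> {1,2} \<Longrightarrow> sd i > 0" using assms(2,3) by auto
  have dmeas: "delta i s \<in> borel_measurable M" if "i \<in> {1,2}" "s \<ge> 1" for i s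
    using distributed_measurable[OF assms(6)[OF that]] by simp
  define ss where "ss = spread_sd sd t"
  have ss_pos: "ss > 0" using assms(2,3,7) unfolding ss_def spread_sd_def
    by (intro real_sqrt_gt_zero mult_pos_pos add_pos_pos) auto
  define c where "c = k * ss"
  have c_pos: "c > 0" using ss_pos assms(4) by (simp add: c_def)
  define A where "A = {1::nat,2} \<times> {1..t}"
  define eps where "eps = (\<lambda>\<omega>. \<Sum>p\<in>A. sg (fst p) * delta (fst p) (snd p) \<omega>)"
  define Sg where "Sg = (\<lambda>x::real. (if x \<le> -c then 1 else 0) - (if x \<ge> c then 1 else 0 :: real))"
  define e where "e = (\<lambda>i \<omega>. exp (1 * delta i (Suc t) \<omega> + mu i))"
  define D where "D = (\<lambda>\<omega>. e 2 \<omega> - e 1 \<omega>)"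
  have A_sub: "A \<subseteq> {1,2} \<times> {1..}" by (auto simp: A_def)
  have fin_A: "finite A" and ne_A: "A \<noteq> {}" using assms(7) by (auto simp: A_def)

  have ind_A: "indep_vars (\<lambda>_. borel) (\<lambda>p \<omega>. sg (fst p) * delta (fst p) (snd p) \<omega>) A"
  proof -
    have "indep_vars (\<lambda>_. borel) (\<lambda>(i, s). delta i s) A"
      by (rule indep_vars_subset[OF ind A_sub])
    then have "indep_vars (\<lambda>_. borel) (\<lambda>p x. sg (fst p) * (\<lambda>(i, s). delta i s) p x) A"
      by (rule indep_vars_compose2) simp
    then show ?thesis by (simp add: split_beta)
  qed
  have dist_A: "distributed M lborel (\<lambda>\<omega>. sg (fst p) * delta (fst p) (snd p) \<omega>) (normal_density 0 (sd (fst p)))"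
    if "p \<in> A" for p
  proof -
    have p: "fst p \<in> {1,2}" "snd p \<ge> 1" using that by (auto simp: A_def)
    have "distributed M lborel (\<lambda>x. 0 + sg (fst p) * delta (fst p) (snd p) x)
        (normal_density (0 + sg (fst p) * 0) (\<bar>sg (fst p)\<bar> * sd (fst p)))"
      by (rule normal_density_affine[OF assms(6)[OF p] sdpos[OF p(1)]]) (simp add: sg_def)
    then show ?thesis by (cases "fst p = 2") (simp_all add: sg_def)
  qed
  have eps_dist: "distributed M lborel eps (normal_density 0 ss)"
  proof -
    have "distributed M lborel (\<lambda>x. \<Sum>p\<in>A. sg (fst p) * delta (fst p) (snd p) x)
       (normal_density (\<Sum>p\<in>A. 0) (sqrt (\<Sum>p\<in>A. (sd (fst p))\<^sup>2)))"
      by (rule sum_indep_normal[OF fin_A ne_A ind_A]) (auto simp: A_def intro: sdpos dist_A[unfolded A_def])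
    then show ?thesis unfolding eps_def ss_def spread_sd_def A_def sd_sum by simp
  qed
  have neps_dist: "distributed M lborel (\<lambda>\<omega>. - eps \<omega>) (normal_density 0 ss)"
    using normal_density_affine[OF eps_dist ss_pos, of "-1" 0] by simp
  have eps_m[measurable]: "eps \<in> borel_measurable M"
    using distributed_measurable[OF eps_dist] by simp
  have P1: "prob {\<omega>\<in>space M. c \<le> eps \<omega>} = measure (density lborel std_normal_density) {k..}"
    using normal_tail[OF ss_pos eps_dist, of c] ss_pos by (simp add: c_def)
  have P2: "prob {\<omega>\<in>space M. eps \<omega> \<le> -c} = measure (density lborel std_normal_density) {k..}"
  proof -
    have "{\<omega>\<in>space M. eps \<omega> \<le> -c} = {\<omega>\<in>space M. c \<le> - eps \<omega>}" by auto
    then show ?thesis using normal_tail[OF ss_pos neps_dist, of c] ss_pos by (simp add: c_def)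
  qed

  have Sg_m[measurable]: "Sg \<in> borel_measurable borel" unfolding Sg_def by measurable
  have pr: "pair_return l0 mu sd k delta t = (\<lambda>\<omega>. Sg (eps \<omega>) * D \<omega>)"
    by (auto simp: fun_eq_iff pair_return_def signal_def stock_return_formula spread_formula
        Sg_def eps_def A_def c_def ss_def D_def e_def add.commute)
  have e_m[measurable]: "e i \<in> borel_measurable M" if "i \<in> {1,2}" for i
    unfolding e_def using dmeas[OF that, of "Suc t"] by simp
  have D_m[measurable]: "D \<in> borel_measurable M" unfolding D_def by simp

  define X where "X = (\<lambda>(i, s). delta i s)"
  define B where "B = {1::nat,2} \<times> {Suc t}"
  have r: "indep_var (PiM A (\<lambda>_. borel)) (\<lambda>\<omega>. restrict (\<lambda>p. X p \<omega>) A)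
      (PiM B (\<lambda>_. borel)) (\<lambda>\<omega>. restrict (\<lambda>p. X p \<omega>) B)"
    unfolding X_def by (rule indep_var_restrict[OF ind]) (auto simp: A_def B_def)
  define FA where "FA = (\<lambda>g. Sg (\<Sum>p\<in>A. sg (fst p) * g p))"
  define FB where "FB = (\<lambda>g. exp (1 * g (2::nat, Suc t) + mu 2) - exp (1 * g (1, Suc t) + mu 1))"
  have FA_m: "FA \<in> borel_measurable (PiM A (\<lambda>_. borel))"
  proof -
    have "(\<lambda>g. \<Sum>p\<in>A. sg (fst p) * g p) \<in> borel_measurable (PiM A (\<lambda>_. borel))"
      by (intro borel_measurable_sum borel_measurable_times borel_measurable_const)
         (auto intro: measurable_component_singleton)
    then show ?thesis unfolding FA_def by measurable
  qed
  have FB_m: "FB \<in> borel_measurable (PiM B (\<lambda>_. borel))"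
    unfolding FB_def B_def by measurable
  have SD_ind: "indep_var borel (\<lambda>\<omega>. Sg (eps \<omega>)) borel D"
  proof -
    have "indep_var borel (FA \<circ> (\<lambda>\<omega>. restrict (\<lambda>p. X p \<omega>) A)) borel (FB \<circ> (\<lambda>\<omega>. restrict (\<lambda>p. X p \<omega>) B))"
      by (rule indep_var_compose[OF r FA_m FB_m])
    also have "FA \<circ> (\<lambda>\<omega>. restrict (\<lambda>p. X p \<omega>) A) = (\<lambda>\<omega>. Sg (eps \<omega>))"
      unfolding FA_def eps_def X_def
      by (auto simp: fun_eq_iff split_beta intro!: arg_cong[where f=Sg] sum.cong)
    also have "FB \<circ> (\<lambda>\<omega>. restrict (\<lambda>p. X p \<omega>) B) = D"
      unfolding FB_def D_def e_def X_def B_def by (auto simp: fun_eq_iff)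
    finally show ?thesis .
  qed
  have e_ind: "indep_var borel (e 1) borel (e 2)"
  proof -
    have r2: "indep_var (PiM {(1::nat, Suc t)} (\<lambda>_. borel)) (\<lambda>\<omega>. restrict (\<lambda>p. X p \<omega>) {(1, Suc t)})
      (PiM {(2, Suc t)} (\<lambda>_. borel)) (\<lambda>\<omega>. restrict (\<lambda>p. X p \<omega>) {(2, Suc t)})"
      unfolding X_def by (rule indep_var_restrict[OF ind]) auto
    have "indep_var borel ((\<lambda>g. exp (1 * g (1::nat, Suc t) + mu 1)) \<circ> (\<lambda>\<omega>. restrict (\<lambda>p. X p \<omega>) {(1, Suc t)}))
        borel ((\<lambda>g. exp (1 * g (2::nat, Suc t) + mu 2)) \<circ> (\<lambda>\<omega>. restrict (\<lambda>p. X p \<omega>) {(2, Suc t)}))"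
      by (rule indep_var_compose[OF r2]) measurable
    then show ?thesis unfolding X_def e_def by (simp add: comp_def)
  qed

  have d1: "distributed M lborel (delta i (Suc t)) (normal_density 0 (sd i))" if "i \<in> {1,2}" for i
    using assms(6)[OF that] by simp
  have e_int: "integrable M (e i)" if "i \<in> {1,2}" for i
    unfolding e_def using prob_space.normal_exp_expectation(1)[OF assms(1) sdpos[OF that] d1[OF that]] by blast
  have e_exp: "expectation (e i) = exp (mu i + (sd i)\<^sup>2 / 2)" if "i \<in> {1,2}" for i
    unfolding e_def using normal_exp_expectation(2)[OF sdpos[OF that] d1[OF that], of 1 "mu i"] by simp
  have e2_eq: "(\<lambda>\<omega>. (e i \<omega>)\<^sup>2) = (\<lambda>\<omega>. exp (2 * delta i (Suc t) \<omega> + 2 * mu i))" for i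
    unfolding e_def by (simp add: exp_sq algebra_simps)
  have e2_int: "integrable M (\<lambda>\<omega>. (e i \<omega>)\<^sup>2)" if "i \<in> {1,2}" for i
    unfolding e2_eq using normal_exp_expectation(1)[OF sdpos[OF that] d1[OF that]] by blast
  have e2_exp: "expectation (\<lambda>\<omega>. (e i \<omega>)\<^sup>2) = exp (2 * mu i + 2 * (sd i)\<^sup>2)" if "i \<in> {1,2}" for i
    unfolding e2_eq using normal_exp_expectation(2)[OF sdpos[OF that] d1[OF that], of 2 "2 * mu i"]
    by (simp add: power2_eq_square algebra_simps)
  have e12_int: "integrable M (\<lambda>\<omega>. e 1 \<omega> * e 2 \<omega>)"
    by (rule indep_var_integrable[OF e_ind e_int e_int]) auto
  have e12_exp: "expectation (\<lambda>\<omega>. e 1 \<omega> * e 2 \<omega>) = exp (mu 1 + (sd 1)\<^sup>2 / 2) * exp (mu 2 + (sd 2)\<^sup>2 / 2)"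
    using indep_var_lebesgue_integral[OF e_ind e_int e_int] e_exp by auto
  have D_int: "integrable M D" unfolding D_def using e_int by auto
  have D2_eq: "(\<lambda>\<omega>. (D \<omega>)\<^sup>2) = (\<lambda>\<omega>. ((e 2 \<omega>)\<^sup>2 + (e 1 \<omega>)\<^sup>2) - 2 * (e 1 \<omega> * e 2 \<omega>))"
    unfolding D_def by (auto simp: fun_eq_iff power2_eq_square algebra_simps)
  have D2_int: "integrable M (\<lambda>\<omega>. (D \<omega>)\<^sup>2)"
    unfolding D2_eq using e2_int e12_int by auto
  have D2_exp: "expectation (\<lambda>\<omega>. (D \<omega>)\<^sup>2) = exp (2 * mu 2 + 2 * (sd 2)\<^sup>2) + exp (2 * mu 1 + 2 * (sd 1)\<^sup>2)
      - 2 * (exp (mu 1 + (sd 1)\<^sup>2 / 2) * exp (mu 2 + (sd 2)\<^sup>2 / 2))"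
    unfolding D2_eq using e2_int e12_int e2_exp e12_exp by simp

  have ev1[measurable]: "{\<omega>\<in>space M. eps \<omega> \<le> -c} \<in> events" by measurable
  have ev2[measurable]: "{\<omega>\<in>space M. c \<le> eps \<omega>} \<in> events" by measurable
  have i1: "integrable M (\<lambda>\<omega>. if eps \<omega> \<le> -c then 1 else 0 :: real)" by (rule integrable_ind[OF ev1])
  have i2: "integrable M (\<lambda>\<omega>. if c \<le> eps \<omega> then 1 else 0 :: real)" by (rule integrable_ind[OF ev2])
  have S_int: "integrable M (\<lambda>\<omega>. Sg (eps \<omega>))" unfolding Sg_def using i1 i2 by auto
  have S_exp: "expectation (\<lambda>\<omega>. Sg (eps \<omega>)) = 0"
    unfolding Sg_def using i1 i2 expectation_ind[OF ev1] expectation_ind[OF ev2] P1 P2 by simp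
  have S2_eq: "(\<lambda>\<omega>. (Sg (eps \<omega>))\<^sup>2) = (\<lambda>\<omega>. (if eps \<omega> \<le> -c then 1 else 0) + (if c \<le> eps \<omega> then 1 else 0 :: real))"
    unfolding Sg_def using c_pos by (auto simp: fun_eq_iff)
  have S2_int: "integrable M (\<lambda>\<omega>. (Sg (eps \<omega>))\<^sup>2)" unfolding S2_eq using i1 i2 by auto
  have S2_exp: "expectation (\<lambda>\<omega>. (Sg (eps \<omega>))\<^sup>2) = 2 * measure (density lborel std_normal_density) {k..}"
    unfolding S2_eq using i1 i2 expectation_ind[OF ev1] expectation_ind[OF ev2] P1 P2 by simp

  have E0: "expectation (pair_return l0 mu sd k delta t) = 0"
    unfolding pr using indep_var_lebesgue_integral[OF SD_ind S_int D_int] S_exp by simp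
  have SD2_ind: "indep_var borel (\<lambda>\<omega>. (Sg (eps \<omega>))\<^sup>2) borel (\<lambda>\<omega>. (D \<omega>)\<^sup>2)"
    using indep_var_compose[OF SD_ind, of "\<lambda>x. x\<^sup>2" borel "\<lambda>x. x\<^sup>2" borel] by (simp add: comp_def)
  have "variance (pair_return l0 mu sd k delta t) = expectation (\<lambda>\<omega>. (Sg (eps \<omega>))\<^sup>2 * (D \<omega>)\<^sup>2)"
    unfolding E0 unfolding pr by (simp add: power_mult_distrib)
  also have "\<dots> = expectation (\<lambda>\<omega>. (Sg (eps \<omega>))\<^sup>2) * expectation (\<lambda>\<omega>. (D \<omega>)\<^sup>2)"
    by (rule indep_var_lebesgue_integral[OF SD2_ind S2_int D2_int])
  also have "\<dots> = 2 * measure (density lborel std_normal_density) {k..} *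
        (exp (2 * mu 1 + 2 * (sd 1)\<^sup>2) + exp (2 * mu 2 + 2 * (sd 2)\<^sup>2)
         - 2 * exp (mu 1 + mu 2 + (sd 1)\<^sup>2 / 2 + (sd 2)\<^sup>2 / 2))"
    unfolding S2_exp D2_exp by (simp add: exp_add[symmetric] algebra_simps)
  finally show ?thesis using E0 by simp
qed

end
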